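(* Let $0<L<M$, $\mathcal{M}=\left]L,M\right[$, and let $\mu$ be a non-atomic finite Borel measure on $[L,M]$ with total mass $\mu([L,M])=M-L$. Then there exists a constant $C_0>0$ such that for every $u\in\mathcal{D}(\mathcal{M})$, $$\|u\|_{L^2_\mu(\mathcal{M})}\le C_0\,\Big\|x\,\frac{\partial u}{\partial x}\Big\|_{L^2(\mathcal{M})}.$$
   Context: $\mathcal{D}(\mathcal{M})$ is the space of smooth functions with compact support in $\mathcal{M}$; $\|u\|_{L^2_\mu(\mathcal{M})}=(\int_L^M u^2\,d\mu)^{1/2}$ and $\|\cdot\|_{L^2(\mathcal{M})}$ is the $L^2$ norm for Lebesgue measure on $\mathcal{M}$. *)

theory Defs
  imports "HOL-Analysis.Analysis"
begin

definition smooth_fun :: "(real \<Rightarrow> real) \<Rightarrow> bool" where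
  "smooth_fun u \<longleftrightarrow> (\<forall>k x. ((deriv ^^ k) u) differentiable (at x))"

definition test_fun :: "real \<Rightarrow> real \<Rightarrow> (real \<Rightarrow> real) \<Rightarrow> bool" where
  "test_fun L M u \<longleftrightarrow> smooth_fun u \<and> compact (closure {x. u x \<noteq> 0})
      \<and> closure {x. u x \<noteq> 0} \<subseteq> {L<..<M}"

end

theory Submission
  imports Defs
begin

lemma cs_int:
  fixes f :: "real \<Rightarrow> real"
  assumes ab: "a \<le> b" and cf: "continuous_on {a..b} f"
  shows "(integral {a..b} f)^2 \<le> (b-a) * integral {a..b} (\<lambda>t. (f t)^2)"
proof (cases "a = b")
  case True then show ?thesis by simp
next
  case False
  then have ab': "a < b" using ab by simp
  define F where "F = integral {a..b} f"
  define I2 where "I2 = integral {a..b} (\<lambda>t. (f t)^2)"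
  define c where "c = F / (b-a)"
  have i1: "f integrable_on {a..b}" using cf integrable_continuous_real by blast
  have c2: "continuous_on {a..b} (\<lambda>t. (f t)^2)" using cf by (intro continuous_intros)
  have i2: "(\<lambda>t. (f t)^2) integrable_on {a..b}" using c2 integrable_continuous_real by blast
  have c3: "continuous_on {a..b} (\<lambda>t. (f t - c)^2)" using cf by (intro continuous_intros)
  have i3: "(\<lambda>t. (f t - c)^2) integrable_on {a..b}" using c3 integrable_continuous_real by blast
  have "0 \<le> integral {a..b} (\<lambda>t. (f t - c)^2)"
    by (rule integral_nonneg[OF i3]) simp
  also have "integral {a..b} (\<lambda>t. (f t - c)^2) = integral {a..b} (\<lambda>t. ((f t)^2 - (2*c) * f t) + c^2)"
    by (rule integral_cong) (simp add: power2_eq_square algebra_simps)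
  also have "\<dots> = I2 - 2*c*F + c^2 * (b-a)"
  proof -
    have i4: "(\<lambda>t. (2*c) * f t) integrable_on {a..b}" using cf by (intro integrable_continuous_real continuous_intros)
    have "integral {a..b} (\<lambda>t. ((f t)^2 - (2*c) * f t) + c^2)
        = integral {a..b} (\<lambda>t. (f t)^2 - (2*c) * f t) + integral {a..b} (\<lambda>t. c^2)"
      by (rule integral_add) (auto intro: integrable_diff i2 i4)
    also have "integral {a..b} (\<lambda>t. (f t)^2 - (2*c) * f t) = I2 - (2*c)*F"
      using integral_diff[OF i2 i4] i1 by (simp add: I2_def F_def)
    finally show ?thesis using ab by simp
  qed
  finally have "0 \<le> I2 - 2*c*F + c^2 * (b-a)" .
  moreover have "2*c*F - c^2 * (b-a) = F^2/(b-a)"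
  proof -
    have gen: "\<And>d::real. d \<noteq> 0 \<Longrightarrow> 2*(F/d)*F - (F/d)^2*d = F^2/d"
      by (simp add: field_simps power2_eq_square)
    show ?thesis unfolding c_def using ab' by (intro gen) simp
  qed
  ultimately have "0 \<le> I2 - F^2/(b-a)" by linarith
  then show ?thesis using ab' by (simp add: F_def I2_def field_simps)
qed


theorem mainTheorem5:
  fixes L M :: real and \<mu> :: "real measure"
  assumes "0 < L" "L < M"
    and "sets \<mu> = sets borel"
    and "emeasure \<mu> (- {L..M}) = 0"
    and "emeasure \<mu> {L..M} = ennreal (M - L)"
    and "\<forall>x. emeasure \<mu> {x} = 0"
  shows "\<exists>C0 > 0. \<forall>u. test_fun L M u \<longrightarrow>
           sqrt (LINT x|\<mu>. (u x)\<^sup>2)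
             \<le> C0 * sqrt (LINT x:{L<..<M}|lborel. (x * deriv u x)\<^sup>2)"
proof -
  note LM = assms(1,2)
  have spc: "space \<mu> = UNIV" using sets_eq_imp_space_eq[OF assms(3)] by simp
  have "emeasure \<mu> UNIV = emeasure \<mu> ({L..M} \<union> - {L..M})" by simp
  also have "\<dots> = emeasure \<mu> {L..M} + emeasure \<mu> (- {L..M})"
    by (rule plus_emeasure[symmetric]) (auto simp: assms(3))
  finally have eU: "emeasure \<mu> UNIV = ennreal (M - L)" using assms(4,5) by simp
  then have fm: "finite_measure \<mu>" by (intro finite_measureI) (simp add: spc)
  have mU: "measure \<mu> (space \<mu>) = M - L" using eU LM by (simp add: spc measure_def)
  show ?thesis
  proof (intro exI[of _ "(M-L)/L"] conjI allI impI)
    show "(M-L)/L > 0" using LM by simp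
    fix u assume tu: "test_fun L M u"
    define D where "D = deriv u"
    have sm: "\<And>k x. ((deriv ^^ k) u) differentiable (at x)" using tu by (simp add: test_fun_def smooth_fun_def)
    have du: "\<And>x. u differentiable (at x)" using sm[of 0] by simp
    have dD: "\<And>x. D differentiable (at x)" using sm[of 1] by (simp add: D_def)
    have hasD: "\<And>x. (u has_real_derivative D x) (at x)"
      using du by (simp add: D_def DERIV_deriv_iff_real_differentiable)
    have contD: "continuous_on S D" for S
      using dD by (meson continuous_at_imp_continuous_on differentiable_imp_continuous_within)
    have zero: "u x = 0" if "x \<notin> {L<..<M}" for x
      using tu that closure_subset[of "{x. u x \<noteq> 0}"] by (auto simp: test_fun_def)
    define I where "I = integral {L..M} (\<lambda>t. (D t)^2)"
    define J where "J = integral {L..M} (\<lambda>t. (t * D t)^2)"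
    have intD2: "(\<lambda>t. (D t)^2) integrable_on S" if "S = {a..b}" for S a b
      unfolding that by (intro integrable_continuous_real continuous_intros contD)
    have pw: "(u x)^2 \<le> (M-L) * I" for x
    proof (cases "x \<in> {L<..<M}")
      case False
      have "0 \<le> I" unfolding I_def by (rule integral_nonneg[OF intD2[OF refl]]) simp
      then show ?thesis using zero[OF False] LM by simp
    next
      case True
      have "(D has_integral u x - u L) {L..x}"
        using True by (intro fundamental_theorem_of_calculus)
          (auto simp: has_real_derivative_iff_has_vector_derivative[symmetric] intro: has_field_derivative_at_within hasD)
      then have ux: "u x = integral {L..x} D" using zero[of L] by (simp add: integral_unique)
      have "(u x)^2 \<le> (x-L) * integral {L..x} (\<lambda>t. (D t)^2)"
        unfolding ux using True by (intro cs_int contD) auto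
      also have "\<dots> \<le> (M-L) * I"
      proof (rule mult_mono)
        show "integral {L..x} (\<lambda>t. (D t)^2) \<le> I" unfolding I_def
          using True by (intro integral_subset_le intD2[OF refl]) auto
        show "0 \<le> integral {L..x} (\<lambda>t. (D t)^2)" by (rule integral_nonneg[OF intD2[OF refl]]) simp
      qed (use True in auto)
      finally show ?thesis .
    qed
    have IJ: "I \<le> J / L^2"
    proof -
      have "I \<le> integral {L..M} (\<lambda>t. (t * D t)^2 / L^2)" unfolding I_def
      proof (rule integral_le[OF intD2[OF refl]])
        show "(\<lambda>t. (t * D t)^2 / L^2) integrable_on {L..M}"
          using LM by (intro integrable_continuous_real continuous_intros contD) auto
        fix t assume t: "t \<in> {L..M}"
        have "L^2 * (D t)^2 \<le> t^2 * (D t)^2"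
          using t LM by (intro mult_right_mono power_mono) auto
        then show "(D t)^2 \<le> (t * D t)^2 / L^2" using LM by (simp add: field_simps power_mult_distrib)
      qed
      also have "\<dots> = J / L^2" unfolding J_def by simp
      finally show ?thesis .
    qed
    have Jeq: "(LINT x:{L<..<M}|lborel. (x * deriv u x)\<^sup>2) = J"
    proof -
      have "(LINT x:{L<..<M}|lborel. (x * deriv u x)\<^sup>2) = (LBINT x=L..M. (x * D x)\<^sup>2)"
        using LM by (simp add: interval_lebesgue_integral_def D_def)
      also have "\<dots> = (LBINT x:{L..M}. (x * D x)\<^sup>2)" using LM by (simp add: interval_integral_Icc)
      also have "\<dots> = J" unfolding J_def
        by (intro set_borel_integral_eq_integral borel_integrable_atLeastAtMost' continuous_intros contD)
      finally show ?thesis .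
    qed
    have I0: "0 \<le> I" unfolding I_def by (rule integral_nonneg[OF intD2[OF refl]]) simp
    have lint: "(LINT x|\<mu>. (u x)\<^sup>2) \<le> (M-L) * I * (M-L)"
    proof -
      have "(LINT x|\<mu>. (u x)\<^sup>2) \<le> (LINT x|\<mu>. (M-L) * I)"
        using pw I0 LM by (intro integral_mono' finite_measure.integrable_const[OF fm]) auto
      also have "\<dots> = (M-L) * I * (M-L)" using mU by simp
      finally show ?thesis .
    qed
    have "sqrt (LINT x|\<mu>. (u x)\<^sup>2) \<le> sqrt ((M-L)^2 * I)"
      using lint by (simp add: power2_eq_square mult_ac)
    also have "\<dots> = (M-L) * sqrt I" using LM by (simp add: real_sqrt_mult)
    also have "\<dots> \<le> (M-L) * sqrt (J / L^2)" using IJ LM by simp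
    also have "\<dots> = (M-L)/L * sqrt J" using LM by (simp add: real_sqrt_divide)
    finally show "sqrt (LINT x|\<mu>. (u x)\<^sup>2) \<le> (M-L)/L * sqrt (LINT x:{L<..<M}|lborel. (x * deriv u x)\<^sup>2)"
      using Jeq by simp
  qed
qed

end
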